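(* If $S$ is an idempotent semiring satisfying $x\approx xyx+x+xyx$, then $S$ satisfies $xyzx\approx xzyx+xyzx+xzyx$.
   Context: An idempotent semiring is an algebra $(S,+,\cdot)$ with two binary operations such that $(S,+)$ and $(S,\cdot)$ are bands (associative, with $x+x=x$ and $xx=x$), and both distributive laws $x(y+z)=xy+xz$ and $(x+y)z=xz+yz$ hold; addition is not assumed commutative. *)

theory Defs
  imports Main
begin

definition band :: "('a \<Rightarrow> 'a \<Rightarrow> 'a) \<Rightarrow> bool" where
  "band f \<longleftrightarrow> (\<forall>x y z. f (f x y) z = f x (f y z)) \<and> (\<forall>x. f x x = x)"

text \<open>Idempotent semiring (S,+,*): both reducts are bands and both distributive
laws hold; addition need not be commutative.  The carrier is the whole type.\<close>
definition idempotent_semiring :: "('a \<Rightarrow> 'a \<Rightarrow> 'a) \<Rightarrow> ('a \<Rightarrow> 'a \<Rightarrow> 'a) \<Rightarrow> bool" where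
  "idempotent_semiring add mul \<longleftrightarrow> band add \<and> band mul \<and>
     (\<forall>x y z. mul x (add y z) = add (mul x y) (mul x z)) \<and>
     (\<forall>x y z. mul (add x y) z = add (mul x z) (mul y z))"

end

theory Submission
  imports Defs
begin

theorem lemma4p6:
  fixes add mul :: "'a \<Rightarrow> 'a \<Rightarrow> 'a"
  assumes "idempotent_semiring add mul"
    and "\<forall>x y. x = add (add (mul (mul x y) x) x) (mul (mul x y) x)"
  shows "\<forall>x y z. mul (mul (mul x y) z) x =
           add (add (mul (mul (mul x z) y) x) (mul (mul (mul x y) z) x)) (mul (mul (mul x z) y) x)"
proof (intro allI)
  fix x y z
  have a1: "\<And>x y z. add (add x y) z = add x (add y z)" and a2: "\<And>x. add x x = x"
    and m1: "\<And>x y z. mul (mul x y) z = mul x (mul y z)" and m2: "\<And>x. mul x x = x"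
    and d1: "\<And>x y z. mul x (add y z) = add (mul x y) (mul x z)"
    and d2: "\<And>x y z. mul (add x y) z = add (mul x z) (mul y z)"
    using assms(1) unfolding idempotent_semiring_def band_def by blast+
  have h: "\<And>x y. x = add (add (mul (mul x y) x) x) (mul (mul x y) x)" using assms(2) by blast
  have l1: "\<And>x w. add x (mul (mul x w) x) = x"
  proof -
    fix x w
    let ?A = "mul (mul x w) x"
    have "add x ?A = add (add (add ?A x) ?A) ?A" using h[of x w] by simp
    also have "\<dots> = add (add ?A x) ?A" by (simp add: a1 a2)
    also have "\<dots> = x" using h[of x w] by simp
    finally show "add x ?A = x" .
  qed
  have l2: "\<And>x w. add (mul (mul x w) x) x = x"
  proof -
    fix x w
    let ?A = "mul (mul x w) x"
    have "add ?A x = add ?A (add (add ?A x) ?A)" using h[of x w] by simp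
    also have "\<dots> = add (add ?A x) ?A" by (simp add: a1 a2 flip: a1)
    also have "\<dots> = x" using h[of x w] by simp
    finally show "add ?A x = x" .
  qed
  define a where "a = mul (mul (mul x y) z) x"
  define b where "b = mul (mul (mul x z) y) x"
  define c where "c = mul b (mul (mul y z) x)"
  have bx1: "add x b = x" using l1[of x "mul z y"] unfolding b_def by (simp add: m1)
  have bx2: "add b x = x" using l2[of x "mul z y"] unfolding b_def by (simp add: m1)
  have "a = mul (add x b) (mul (mul y z) x)" unfolding a_def bx1 by (simp add: m1)
  hence ac1: "a = add a c" unfolding d2 a_def c_def by (simp add: m1)
  have "a = mul (add b x) (mul (mul y z) x)" unfolding a_def bx2 by (simp add: m1)
  hence ac2: "a = add c a" unfolding d2 a_def c_def by (simp add: m1)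
  have band: "mul (mul b (mul y z)) b = b" unfolding b_def by (metis m1 m2)
  have "c = mul (mul b (mul y z)) (add x b)" unfolding bx1 c_def by (simp add: m1)
  hence cb1: "c = add c b" unfolding d1 band by (simp add: c_def m1)
  have "c = mul (mul b (mul y z)) (add b x)" unfolding bx2 c_def by (simp add: m1)
  hence cb2: "c = add b c" unfolding d1 band by (simp add: c_def m1)
  have ab: "add a b = a" by (metis ac1 cb1 a1)
  have ba: "add b a = a" by (metis ac2 cb2 a1)
  show "mul (mul (mul x y) z) x = add (add b a) b" using ab ba unfolding a_def[symmetric] by simp
qed

end
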